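(* Let $T$ be a phylogenetic tree on a leaf set $X$ with $|X|\ge4$, equipped with the quartet metrization $w$. Then $w(e)\ge|X|-2$ for every edge $e$ of $T$.
   Context: A phylogenetic tree on $X$ is an unrooted tree whose leaves are bijectively labeled by $X$ and all of whose non-leaf nodes have degree 3. Each internal edge $e$ determines a partition of $X$ into four nonempty blocks $X_1,X_2,X_3,X_4$, where $e$ induces the split $X_1\cup X_2|X_3\cup X_4$ and the four edges adjacent to $e$ induce splits each separating one $X_i$ from the rest; the quartet metrization assigns $w(e)=|X_1||X_2|+|X_3||X_4|$. Each pendant edge $e$ incident to leaf $x$ determines a tripartition $(\{x\},X_1,X_2)$, where $X_1,X_2$ are the leaf sets separated by the two other edges at the non-leaf end of $e$; the quartet metrization assigns $w(e)=|X_1||X_2|$. *)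

theory Defs
  imports Main
begin

definition simple_graph :: "'v set \<Rightarrow> 'v set set \<Rightarrow> bool" where
  "simple_graph V E \<longleftrightarrow> finite V \<and>
     (\<forall>e\<in>E. \<exists>u v. u \<noteq> v \<and> u \<in> V \<and> v \<in> V \<and> e = {u, v})"

definition reachable :: "'v set set \<Rightarrow> 'v \<Rightarrow> 'v \<Rightarrow> bool" where
  "reachable F a b \<longleftrightarrow> (a, b) \<in> {(x, y). {x, y} \<in> F}\<^sup>*"

definition nbrs :: "'v set set \<Rightarrow> 'v \<Rightarrow> 'v set" where
  "nbrs E u = {v. {u, v} \<in> E}"

definition degree :: "'v set set \<Rightarrow> 'v \<Rightarrow> nat" where
  "degree E u = card (nbrs E u)"

definition is_tree :: "'v set \<Rightarrow> 'v set set \<Rightarrow> bool" where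
  "is_tree V E \<longleftrightarrow> simple_graph V E \<and> V \<noteq> {} \<and>
     (\<forall>a\<in>V. \<forall>b\<in>V. reachable E a b) \<and>
     (\<forall>u v. {u, v} \<in> E \<longrightarrow> \<not> reachable (E - {{u, v}}) u v)"

definition leaves :: "'v set \<Rightarrow> 'v set set \<Rightarrow> 'v set" where
  "leaves V E = {v\<in>V. degree E v = 1}"

definition phylogenetic_tree :: "'a set \<Rightarrow> 'v set \<Rightarrow> 'v set set \<Rightarrow> ('a \<Rightarrow> 'v) \<Rightarrow> bool" where
  "phylogenetic_tree X V E lab \<longleftrightarrow> is_tree V E \<and>
     bij_betw lab X (leaves V E) \<and>
     (\<forall>v\<in>V - leaves V E. degree E v = 3)"

text \<open>For an edge {u,a}: the leaf labels on the side of a, i.e. labels of leaves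
  reachable from a after deleting the edge {u,a}. This is the block of the split
  induced by edge {u,a} not containing u.\<close>
definition side :: "'a set \<Rightarrow> 'v set set \<Rightarrow> ('a \<Rightarrow> 'v) \<Rightarrow> 'v \<Rightarrow> 'v \<Rightarrow> 'a set" where
  "side X E lab u a = {x\<in>X. reachable (E - {{u, a}}) a (lab x)}"

definition half_weight :: "'a set \<Rightarrow> 'v set set \<Rightarrow> ('a \<Rightarrow> 'v) \<Rightarrow> 'v \<Rightarrow> 'v \<Rightarrow> nat" where
  "half_weight X E lab u v = (\<Prod>a\<in>nbrs E u - {v}. card (side X E lab u a))"

text \<open>Quartet metrization of edge {u,v}: internal edge gives |X1||X2|+|X3||X4|,
  pendant edge (one endpoint a leaf) gives |X1||X2| for the non-leaf endpoint.\<close>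
definition quartet_weight :: "'a set \<Rightarrow> 'v set \<Rightarrow> 'v set set \<Rightarrow> ('a \<Rightarrow> 'v) \<Rightarrow> 'v \<Rightarrow> 'v \<Rightarrow> nat" where
  "quartet_weight X V E lab u v =
     (if u \<in> leaves V E then 0 else half_weight X E lab u v) +
     (if v \<in> leaves V E then 0 else half_weight X E lab v u)"

end

theory Submission
  imports Defs
begin

lemma reach_succ:
  "successively (\<lambda>x y. {x,y} \<in> F) p \<Longrightarrow> p \<noteq> [] \<Longrightarrow> reachable F (hd p) (last p)"
proof (induction p rule: induct_list012)
  case 1 then show ?case by simp
next
  case (2 x) then show ?case by (simp add: reachable_def)
next
  case (3 x y xs)
  then have "reachable F y (last (y # xs))" by simp
  moreover have "{x,y} \<in> F" using 3 by simp
  ultimately show ?case unfolding reachable_def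
    by (simp add: converse_rtrancl_into_rtrancl)
qed

lemma reach_sym: "reachable F a b \<Longrightarrow> reachable F b a"
proof -
  have "sym {(x, y). {x, y} \<in> F}" by (auto simp: sym_def insert_commute)
  then have "sym ({(x, y). {x, y} \<in> F}\<^sup>*)" by (rule sym_rtrancl)
  then show "reachable F a b \<Longrightarrow> reachable F b a" unfolding reachable_def by (auto dest: symD)
qed

lemma reach_mono: "F \<subseteq> G \<Longrightarrow> reachable F a b \<Longrightarrow> reachable G a b"
  unfolding reachable_def by (erule rtrancl_mono[THEN subsetD, rotated]) auto

lemma reach_split:
  "reachable E u w \<Longrightarrow> w = u \<or> (\<exists>n\<in>nbrs E u. reachable (E-{{u,n}}) n w)"
  unfolding reachable_def
proof (induction rule: rtrancl_induct)
  case base then show ?case by simp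
next
  case (step y z)
  then have yz: "{y,z} \<in> E" by simp
  from step.IH show ?case
  proof
    assume "y = u" then show ?thesis using yz by (auto simp: nbrs_def)
  next
    assume "\<exists>n\<in>nbrs E u. (n, y) \<in> {(x, y). {x, y} \<in> E - {{u, n}}}\<^sup>*"
    then obtain n where n: "n \<in> nbrs E u" "(n, y) \<in> {(x, y). {x, y} \<in> E - {{u, n}}}\<^sup>*" by blast
    show ?thesis
    proof (cases "{y,z} = {u,n}")
      case True
      show ?thesis
      proof (cases "y = u")
        case True then show ?thesis using yz by (auto simp: nbrs_def)
      next
        case False
        then have "z = u" using \<open>{y,z} = {u,n}\<close> by (auto simp: doubleton_eq_iff)
        then show ?thesis by simp
      qed
    next
      case False
      then have "(n, z) \<in> {(x, y). {x, y} \<in> E - {{u, n}}}\<^sup>*"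
        using n(2) yz by (auto intro: rtrancl_into_rtrancl)
      then show ?thesis using n(1) by blast
    qed
  qed
qed


lemma edge_in_V:
  assumes "simple_graph V E" "{x,y} \<in> E"
  shows "x \<in> V" "y \<in> V" "x \<noteq> y"
  using assms unfolding simple_graph_def by (auto simp: doubleton_eq_iff)

lemma exists_leaf:
  assumes tree: "is_tree V E" and ua: "{u,a} \<in> E"
  shows "\<exists>h. h \<in> V \<and> degree E h = 1 \<and> reachable (E - {{u,a}}) a h"
proof -
  have sg: "simple_graph V E" and fin: "finite V"
    and bridge: "\<And>x y. {x,y} \<in> E \<Longrightarrow> \<not> reachable (E - {{x,y}}) x y"
    using tree unfolding is_tree_def simple_graph_def by auto
  have aV: "a \<in> V" and uV: "u \<in> V" and ua_ne: "u \<noteq> a" using edge_in_V[OF sg ua] by auto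
  define P where "P p \<longleftrightarrow> p \<noteq> [] \<and> last p = a \<and> u \<notin> set p \<and> distinct p \<and> set p \<subseteq> V
     \<and> successively (\<lambda>x y. {x,y} \<in> E) p" for p
  have P0: "P [a]" using aV ua_ne by (simp add: P_def)
  have bnd: "\<forall>p. P p \<longrightarrow> length p < Suc (card V)"
  proof (intro allI impI)
    fix p assume "P p"
    then have "card (set p) = length p" "card (set p) \<le> card V"
      using fin card_mono[OF fin, of "set p"] by (simp_all add: P_def distinct_card)
    then show "length p < Suc (card V)" by simp
  qed
  obtain p where Pp: "P p" and pmax: "\<And>q. P q \<Longrightarrow> length q \<le> length p"
    using Lattices_Big.ex_has_greatest_nat[of P "[a]" length "Suc (card V)", OF P0 bnd] by blast
  then obtain h q where p: "p = h # q" unfolding P_def by (cases p) auto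
  have hV: "h \<in> V" using Pp p by (simp add: P_def)
  have succ: "successively (\<lambda>x y. {x,y} \<in> E) (h # q)" using Pp p by (simp add: P_def)
  have dist: "distinct (h # q)" using Pp p by (simp add: P_def)
  have u_notin: "u \<notin> set (h # q)" using Pp p by (simp add: P_def)
  have lastp: "last (h # q) = a" using Pp p by (simp add: P_def)
  define s where "s = (if q = [] then u else hd q)"
  have s_nb: "{h, s} \<in> E"
  proof (cases "q = []")
    case True then show ?thesis using lastp ua by (simp add: s_def insert_commute)
  next
    case False then show ?thesis using succ by (simp add: s_def successively_Cons)
  qed
  have "y = s" if hy: "{h,y} \<in> E" for y
  proof (rule ccontr)
    assume ys: "y \<noteq> s"
    have yV: "y \<in> V" and hy_ne: "h \<noteq> y" using edge_in_V[OF sg hy] by auto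
    have succ_red: "successively (\<lambda>x z. {x,z} \<in> E - {{h,u}}) (h # q)"
      by (rule successively_mono[OF succ]) (use u_notin in \<open>auto simp: doubleton_eq_iff\<close>)
    show False
    proof (cases "y = u")
      case True
      then have qne: "q \<noteq> []" using ys s_def by auto
      then have "a \<in> set q" using lastp by auto
      then have ha: "h \<noteq> a" using dist by auto
      have r1: "reachable (E - {{h,u}}) h a" using reach_succ[OF succ_red] lastp by simp
      have "{a,u} \<in> E - {{h,u}}" using ua ha ua_ne by (auto simp: insert_commute doubleton_eq_iff)
      then have "reachable (E - {{h,u}}) a u" unfolding reachable_def by auto
      with r1 have "reachable (E - {{h,u}}) h u" unfolding reachable_def by (rule rtrancl_trans)
      then show False using bridge[of h u] hy True by simp
    next
      case yu: False
      show False
      proof (cases "y \<in> set p")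
        case False
        have "P (y # p)" using Pp False yV yu hy p
          by (auto simp: P_def insert_commute)
        then show False using pmax[of "y # p"] by simp
      next
        case True
        then have yq: "y \<in> set q" using p hy_ne by auto
        then have qne: "q \<noteq> []" by auto
        then have yhd: "y \<noteq> hd q" using ys s_def by simp
        obtain q1 q2 where q: "q = q1 @ y # q2" using split_list[OF yq] by blast
        have q1ne: "q1 \<noteq> []" using q yhd by auto
        have succ2: "successively (\<lambda>x y. {x,y} \<in> E) (h # q1 @ [y])"
          using succ unfolding q
          by (simp add: successively_Cons successively_append_iff q1ne)
        have hnot: "h \<notin> set (q1 @ [y])" using dist q hy_ne by auto
        have ynot: "y \<notin> set q1" using dist q by auto
        have s1: "successively (\<lambda>x z. {x,z} \<in> E - {{h,y}}) (q1 @ [y])"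
        proof (rule successively_mono)
          show "successively (\<lambda>x y. {x,y} \<in> E) (q1 @ [y])"
            using succ2 by (simp add: successively_Cons)
        next
          fix x z assume xz: "x \<in> set (q1 @ [y])" "z \<in> set (q1 @ [y])" "{x,z} \<in> E"
          have "h \<notin> {x,z}" using hnot xz(1,2) by blast
          then have "{x,z} \<noteq> {h,y}" by blast
          then show "{x,z} \<in> E - {{h,y}}" using xz(3) by blast
        qed
        have "{h, hd q1} \<in> E" using succ2 q1ne by (simp add: successively_Cons)
        moreover have "hd q1 \<noteq> y" using ynot q1ne by (cases q1) auto
        moreover have "hd (q1 @ [y]) = hd q1" using q1ne by simp
        ultimately have "{h, hd (q1 @ [y])} \<in> E - {{h,y}}" using hy_ne
          by (simp only: Diff_iff singleton_iff doubleton_eq_iff) blast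
        then have "successively (\<lambda>x z. {x,z} \<in> E - {{h,y}}) (h # q1 @ [y])"
          using s1 by (simp add: successively_Cons)
        from reach_succ[OF this] have "reachable (E - {{h,y}}) h y" by simp
        then show False using bridge[OF hy] by simp
      qed
    qed
  qed
  then have "nbrs E h = {s}" using s_nb unfolding nbrs_def by blast
  then have deg: "degree E h = 1" by (simp add: degree_def)
  have "successively (\<lambda>x z. {x,z} \<in> E - {{u,a}}) (h # q)"
    by (rule successively_mono[OF succ]) (use u_notin in \<open>auto simp: doubleton_eq_iff\<close>)
  from reach_succ[OF this] lastp have "reachable (E - {{u,a}}) h a" by simp
  then have "reachable (E - {{u,a}}) a h" by (rule reach_sym)
  then show ?thesis using hV deg by blast
qed


lemma prod_bound: "(a::nat) \<ge> 1 \<Longrightarrow> b \<ge> 1 \<Longrightarrow> a + b \<le> a * b + 1"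
  by (cases a; cases b) auto

lemma second_step:
  assumes "{p,q} \<in> E" "reachable (E - {{p,q}}) q w" "w \<noteq> q"
  shows "\<exists>n\<in>nbrs E q - {p}. reachable (E - {{q,n}}) n w"
proof -
  from reach_split[OF assms(2)] assms(3) obtain n where
    n: "n \<in> nbrs (E - {{p,q}}) q" "reachable (E - {{p,q}} - {{q,n}}) n w" by blast
  have "n \<in> nbrs E q - {p}" using n(1) unfolding nbrs_def by (auto simp: insert_commute)
  moreover have "reachable (E - {{q,n}}) n w" using n(2) by (rule reach_mono[rotated]) blast
  ultimately show ?thesis by blast
qed

lemma nbrs3:
  assumes "card (nbrs E p) = 3" "q \<in> nbrs E p"
  shows "\<exists>a b. nbrs E p = {q,a,b} \<and> a \<noteq> b \<and> a \<noteq> q \<and> b \<noteq> q"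
proof -
  obtain x y z where xyz: "nbrs E p = {x,y,z}" "x \<noteq> y" "y \<noteq> z" "x \<noteq> z"
    using assms(1) card_3_iff by metis
  then have "q = x \<or> q = y \<or> q = z" using assms(2) by auto
  then show ?thesis
  proof (elim disjE)
    assume "q = x" then show ?thesis using xyz by blast
  next
    assume "q = y" then show ?thesis using xyz by (intro exI[of _ x] exI[of _ z]) auto
  next
    assume "q = z" then show ?thesis using xyz by (intro exI[of _ x] exI[of _ y]) auto
  qed
qed

lemma hw_eq:
  assumes "nbrs E p = {q,a,b}" "a \<noteq> b" "a \<noteq> q" "b \<noteq> q"
  shows "half_weight X E lab p q = card (side X E lab p a) * card (side X E lab p b)"
proof -
  have "nbrs E p - {q} = {a,b}" using assms by auto
  then show ?thesis unfolding half_weight_def using assms(2) by simp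
qed

locale phylo =
  fixes X :: "'a set" and V :: "'v set" and E :: "'v set set" and lab :: "'a \<Rightarrow> 'v"
  assumes ph: "phylogenetic_tree X V E lab" and finX: "finite X"
begin

lemma tree: "is_tree V E" using ph by (simp add: phylogenetic_tree_def)
lemma sg: "simple_graph V E" using tree by (simp add: is_tree_def)
lemma conn: "a \<in> V \<Longrightarrow> b \<in> V \<Longrightarrow> reachable E a b" using tree by (simp add: is_tree_def)
lemma bij: "bij_betw lab X (leaves V E)" using ph by (simp add: phylogenetic_tree_def)
lemma deg3: "v \<in> V \<Longrightarrow> v \<notin> leaves V E \<Longrightarrow> card (nbrs E v) = 3"
  using ph by (simp add: phylogenetic_tree_def degree_def)
lemma lableaf: "x \<in> X \<Longrightarrow> lab x \<in> leaves V E" using bij by (auto simp: bij_betw_def)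
lemma labV: "x \<in> X \<Longrightarrow> lab x \<in> V" using lableaf by (simp add: leaves_def)

lemma side_ge1:
  assumes "{p,c} \<in> E" shows "card (side X E lab p c) \<ge> 1"
proof -
  obtain h where h: "h \<in> V" "degree E h = 1" "reachable (E - {{p,c}}) c h"
    using exists_leaf[OF tree assms] by blast
  then have "h \<in> leaves V E" by (simp add: leaves_def)
  then have "h \<in> lab ` X" using bij by (simp add: bij_betw_def)
  then obtain x where x: "x \<in> X" "lab x = h" by blast
  then have "x \<in> side X E lab p c" using h(3) by (simp add: side_def)
  moreover have "finite (side X E lab p c)" using finX by (simp add: side_def)
  ultimately have "card (side X E lab p c) \<noteq> 0" by auto
  then show ?thesis by simp
qed

lemma cover:
  assumes "p \<in> V" "x \<in> X" "lab x \<noteq> p"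
  shows "\<exists>n\<in>nbrs E p. x \<in> side X E lab p n"
  using reach_split[OF conn[OF assms(1) labV[OF assms(2)]]] assms(2,3)
  by (auto simp: side_def)

lemma pendant:
  assumes pq: "{p,q} \<in> E" and pint: "p \<notin> leaves V E" and qleaf: "q \<in> leaves V E"
  shows "half_weight X E lab p q + 2 \<ge> card X"
proof -
  have pV: "p \<in> V" and qV: "q \<in> V" using edge_in_V[OF sg pq] by auto
  have qn: "q \<in> nbrs E p" using pq by (simp add: nbrs_def)
  obtain a b where ab: "nbrs E p = {q,a,b}" "a \<noteq> b" "a \<noteq> q" "b \<noteq> q"
    using nbrs3[OF deg3[OF pV pint] qn] by blast
  have hw: "half_weight X E lab p q = card (side X E lab p a) * card (side X E lab p b)"
    by (rule hw_eq[OF ab])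
  have pa: "{p,a} \<in> E" and pb: "{p,b} \<in> E" using ab(1) by (auto simp: nbrs_def)
  have A: "card (side X E lab p a) \<ge> 1" by (rule side_ge1[OF pa])
  have B: "card (side X E lab p b) \<ge> 1" by (rule side_ge1[OF pb])
  have "q \<in> lab ` X" using qleaf bij by (simp add: bij_betw_def)
  then obtain x0 where x0: "x0 \<in> X" "lab x0 = q" by blast
  have "card (nbrs E q) = 1" using qleaf by (simp add: leaves_def degree_def)
  moreover have "p \<in> nbrs E q" using pq by (simp add: nbrs_def insert_commute)
  ultimately have nq: "nbrs E q = {p}" by (metis card_1_singletonE singletonD)
  have sub: "X \<subseteq> side X E lab p a \<union> side X E lab p b \<union> {x0}"
  proof
    fix x assume x: "x \<in> X"
    have "lab x \<noteq> p" using lableaf[OF x] pint by auto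
    then obtain n where n: "n \<in> nbrs E p" "x \<in> side X E lab p n" using cover[OF pV x] by blast
    show "x \<in> side X E lab p a \<union> side X E lab p b \<union> {x0}"
    proof (cases "n = q")
      case True
      show ?thesis
      proof (cases "lab x = q")
        case True
        then have "x = x0" using x0 x bij unfolding bij_betw_def by (metis inj_onD)
        then show ?thesis by simp
      next
        case False
        have "reachable (E - {{p,q}}) q (lab x)" using n(2) \<open>n = q\<close> by (simp add: side_def)
        from second_step[OF pq this False] nq have False by blast
        then show ?thesis ..
      qed
    next
      case False
      then show ?thesis using n ab(1) by auto
    qed
  qed
  have "card X \<le> card (side X E lab p a \<union> side X E lab p b \<union> {x0})"
    using sub finX by (intro card_mono) (auto simp: side_def)
  also have "\<dots> \<le> card (side X E lab p a) + card (side X E lab p b) + 1"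
    using card_Un_le[of "side X E lab p a \<union> side X E lab p b" "{x0}"]
      card_Un_le[of "side X E lab p a" "side X E lab p b"] by simp
  also have "\<dots> \<le> card (side X E lab p a) * card (side X E lab p b) + 2"
    using prod_bound[OF A B] by simp
  finally show ?thesis using hw by simp
qed


lemma internal:
  assumes pq: "{p,q} \<in> E" and pint: "p \<notin> leaves V E" and qint: "q \<notin> leaves V E"
  shows "half_weight X E lab p q + half_weight X E lab q p + 2 \<ge> card X"
proof -
  have pV: "p \<in> V" and qV: "q \<in> V" using edge_in_V[OF sg pq] by auto
  have qp: "{q,p} \<in> E" using pq by (simp add: insert_commute)
  have qn: "q \<in> nbrs E p" using pq by (simp add: nbrs_def)
  have pn: "p \<in> nbrs E q" using qp by (simp add: nbrs_def)
  obtain a b where ab: "nbrs E p = {q,a,b}" "a \<noteq> b" "a \<noteq> q" "b \<noteq> q"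
    using nbrs3[OF deg3[OF pV pint] qn] by blast
  obtain c d where cd: "nbrs E q = {p,c,d}" "c \<noteq> d" "c \<noteq> p" "d \<noteq> p"
    using nbrs3[OF deg3[OF qV qint] pn] by blast
  define A where "A = side X E lab p a"
  define B where "B = side X E lab p b"
  define C where "C = side X E lab q c"
  define D where "D = side X E lab q d"
  have hw1: "half_weight X E lab p q = card A * card B"
    unfolding A_def B_def by (rule hw_eq[OF ab])
  have hw2: "half_weight X E lab q p = card C * card D"
    unfolding C_def D_def by (rule hw_eq[OF cd])
  have pa: "{p,a} \<in> E" and pb: "{p,b} \<in> E" using ab(1) by (auto simp: nbrs_def)
  have qc: "{q,c} \<in> E" and qd: "{q,d} \<in> E" using cd(1) by (auto simp: nbrs_def)
  have A1: "card A \<ge> 1" unfolding A_def by (rule side_ge1[OF pa])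
  have B1: "card B \<ge> 1" unfolding B_def by (rule side_ge1[OF pb])
  have C1: "card C \<ge> 1" unfolding C_def by (rule side_ge1[OF qc])
  have D1: "card D \<ge> 1" unfolding D_def by (rule side_ge1[OF qd])
  have sub: "X \<subseteq> A \<union> B \<union> (C \<union> D)"
  proof
    fix x assume x: "x \<in> X"
    have "lab x \<noteq> p" using lableaf[OF x] pint by auto
    then obtain n where n: "n \<in> nbrs E p" "x \<in> side X E lab p n" using cover[OF pV x] by blast
    show "x \<in> A \<union> B \<union> (C \<union> D)"
    proof (cases "n = q")
      case True
      have ne: "lab x \<noteq> q" using lableaf[OF x] qint by auto
      have "reachable (E - {{p,q}}) q (lab x)" using n(2) \<open>n = q\<close> by (simp add: side_def)
      from second_step[OF pq this ne] obtain m where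
        m: "m \<in> nbrs E q - {p}" "reachable (E - {{q,m}}) m (lab x)" by blast
      then have "m = c \<or> m = d" using cd(1) by auto
      then show ?thesis using m(2) x unfolding C_def D_def side_def by auto
    next
      case False
      then have "n = a \<or> n = b" using n(1) ab(1) by auto
      then show ?thesis using n(2) unfolding A_def B_def by auto
    qed
  qed
  have fin: "finite A" "finite B" "finite C" "finite D"
    using finX unfolding A_def B_def C_def D_def side_def by auto
  have "card X \<le> card (A \<union> B \<union> (C \<union> D))"
    using sub fin by (intro card_mono) auto
  also have "\<dots> \<le> card A + card B + (card C + card D)"
    using card_Un_le[of "A \<union> B" "C \<union> D"] card_Un_le[of A B] card_Un_le[of C D] by simp
  also have "\<dots> \<le> card A * card B + card C * card D + 2"
    using prod_bound[OF A1 B1] prod_bound[OF C1 D1] by simp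
  finally show ?thesis using hw1 hw2 by simp
qed

lemma both_leaves:
  assumes pq: "{p,q} \<in> E" and pl: "p \<in> leaves V E" and ql: "q \<in> leaves V E"
  shows "card X \<le> 2"
proof -
  have pV: "p \<in> V" and qV: "q \<in> V" and ne: "p \<noteq> q" using edge_in_V[OF sg pq] by auto
  have qp: "{q,p} \<in> E" using pq by (simp add: insert_commute)
  have "card (nbrs E q) = 1" using ql by (simp add: leaves_def degree_def)
  moreover have "p \<in> nbrs E q" using qp by (simp add: nbrs_def)
  ultimately have nq: "nbrs E q = {p}" by (metis card_1_singletonE singletonD)
  have "card (nbrs E p) = 1" using pl by (simp add: leaves_def degree_def)
  moreover have "q \<in> nbrs E p" using pq by (simp add: nbrs_def)
  ultimately have np: "nbrs E p = {q}" by (metis card_1_singletonE singletonD)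
  have sub: "lab ` X \<subseteq> {p,q}"
  proof
    fix w assume "w \<in> lab ` X"
    then obtain x where x: "x \<in> X" "w = lab x" by blast
    show "w \<in> {p,q}"
    proof (rule ccontr)
      assume w: "w \<notin> {p,q}"
      from reach_split[OF conn[OF pV labV[OF x(1)]]] w x(2) np
      have "reachable (E - {{p,q}}) q w" by auto
      from second_step[OF pq this] w nq show False by blast
    qed
  qed
  have "inj_on lab X" using bij by (simp add: bij_betw_def)
  then have "card X = card (lab ` X)" by (simp add: card_image)
  also have "\<dots> \<le> card {p,q}" by (rule card_mono) (use sub in auto)
  also have "\<dots> \<le> 2" by (simp add: card_insert_le_m1)
  finally show ?thesis .
qed

end

theorem proposition2p11:
  fixes X :: "'a set" and V :: "'v set" and E :: "'v set set" and lab :: "'a \<Rightarrow> 'v"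
  assumes "phylogenetic_tree X V E lab"
    and "card X \<ge> 4"
    and "{u, v} \<in> E"
  shows "quartet_weight X V E lab u v \<ge> card X - 2"
proof -
  have finX: "finite X" using assms(2) by (metis card.infinite not_numeral_le_zero)
  interpret phylo X V E lab using assms(1) finX by unfold_locales
  have vu: "{v,u} \<in> E" using assms(3) by (simp add: insert_commute)
  show ?thesis
  proof (cases "u \<in> leaves V E")
    case ul: True
    show ?thesis
    proof (cases "v \<in> leaves V E")
      case True
      with both_leaves[OF assms(3) ul] assms(2) show ?thesis by simp
    next
      case False
      with pendant[OF vu False ul] ul show ?thesis by (simp add: quartet_weight_def)
    qed
  next
    case ul: False
    show ?thesis
    proof (cases "v \<in> leaves V E")
      case True
      with pendant[OF assms(3) ul True] ul show ?thesis by (simp add: quartet_weight_def)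
    next
      case False
      with internal[OF assms(3) ul False] ul show ?thesis by (simp add: quartet_weight_def)
    qed
  qed
qed

end
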